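(* Assume (C1) the maximum likelihood estimator $\widehat{\theta}$ exists and is an interior point of $\Theta$, and (C2) the log-likelihood $\ell$ is strictly concave on $\Theta$. Let $\Theta_0\subseteq\Theta$ be nonempty and assume $F$ is continuous and strictly increasing. Then $$s(\Theta_0)=\sup_{\theta\in\Theta_0}\bigl(1-F(T_\theta)\bigr)=1-F(T_{\Theta_0}),$$ where $T_{\Theta_0}=2\bigl(\ell(\widehat{\theta})-\ell(\widehat{\theta}_0)\bigr)$ with $\widehat{\theta}_0=\arg\sup_{\theta\in\Theta_0}\ell(\theta)$ (i.e. $T_{\Theta_0}=2(\ell(\widehat{\theta})-\sup_{\theta\in\Theta_0}\ell(\theta))$).
   Context: Let $\Theta\subseteq\mathbb{R}^k$ be a parameter space of a parametric statistical model, $x$ the observed data, and $\ell(\theta)=\ell(\theta;x)$ the log-likelihood. Let $\widehat{\theta}=\arg\sup_{\theta\in\Theta}\ell(\theta)$ be the maximum likelihood estimator, and for $\theta\in\Theta$ put $T_\theta=2(\ell(\widehat{\theta})-\ell(\theta))\ge 0$. Let $F$ be a cumulative distribution function of a nonnegative random variable (in the paper, the (approximate) distribution of $T_{\theta_0}$ at the true parameter $\theta_0$, assumed not to depend on $\theta_0$). For $\alpha\in(0,1)$, let $F_\alpha$ be the $1-\alpha$ quantile of $F$, i.e. $F(F_\alpha)=1-\alpha$. The likelihood-based confidence region of level $\alpha$ is $\Lambda_\alpha=\{\theta\in\Theta: T_\theta\le F_\alpha\}$. For $\Theta_0\subseteq\Theta$, the $s$-value (evidence measure for $H_0:\theta\in\Theta_0$)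 is $$s(\Theta_0)=\max\{0,\ \sup\{\alpha\in(0,1):\ \Lambda_\alpha\cap\Theta_0\neq\varnothing\}\},$$ with the convention that the supremum of the empty set does not exceed $0$. *)

theory Defs
  imports "HOL-Probability.Probability"
begin

definition strictly_concave_on :: "'a::real_vector set \<Rightarrow> ('a \<Rightarrow> real) \<Rightarrow> bool" where
  "strictly_concave_on S f \<longleftrightarrow> convex S \<and>
     (\<forall>x\<in>S. \<forall>y\<in>S. x \<noteq> y \<longrightarrow>
        (\<forall>t::real. 0 < t \<and> t < 1 \<longrightarrow> (1 - t) * f x + t * f y < f ((1 - t) *\<^sub>R x + t *\<^sub>R y)))"

definition LR_stat :: "('a \<Rightarrow> real) \<Rightarrow> 'a \<Rightarrow> 'a \<Rightarrow> real" where
  "LR_stat l thetahat theta = 2 * (l thetahat - l theta)"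

definition upper_quantile :: "(real \<Rightarrow> real) \<Rightarrow> real \<Rightarrow> real" where
  "upper_quantile F alpha = (THE q. F q = 1 - alpha)"

definition conf_region :: "('a \<Rightarrow> real) \<Rightarrow> 'a set \<Rightarrow> 'a \<Rightarrow> (real \<Rightarrow> real) \<Rightarrow> real \<Rightarrow> 'a set" where
  "conf_region l Theta thetahat F alpha =
     {theta \<in> Theta. LR_stat l thetahat theta \<le> upper_quantile F alpha}"

text \<open>s-value; the supremum of the empty set is taken not to exceed 0.\<close>
definition s_value :: "('a \<Rightarrow> real) \<Rightarrow> 'a set \<Rightarrow> 'a \<Rightarrow> (real \<Rightarrow> real) \<Rightarrow> 'a set \<Rightarrow> real" where
  "s_value l Theta thetahat F Theta0 =
     (let A = {alpha. 0 < alpha \<and> alpha < 1 \<and> conf_region l Theta thetahat F alpha \<inter> Theta0 \<noteq> {}}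
      in if A = {} then 0 else max 0 (Sup A))"

end

theory Submission
  imports Defs
begin

theorem lemma3p2:
  fixes Theta Theta0 :: "(real ^ 'k) set"
    and l :: "real ^ 'k \<Rightarrow> real"
    and thetahat :: "real ^ 'k"
    and M :: "real measure"
    and F :: "real \<Rightarrow> real"
  assumes mle_in: "thetahat \<in> Theta"
    and mle_max: "\<forall>theta\<in>Theta. l theta \<le> l thetahat"
    and mle_interior: "thetahat \<in> interior Theta"
    and concave: "strictly_concave_on Theta l"
    and distr: "real_distribution M"
    and nonneg: "AE x in M. 0 \<le> x"
    and F_cdf: "F = cdf M"
    and F_cont: "continuous_on UNIV F"
    and F_strict: "strict_mono_on {0..} F"
    and Theta0_sub: "Theta0 \<subseteq> Theta"
    and Theta0_ne: "Theta0 \<noteq> {}"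
  shows "s_value l Theta thetahat F Theta0 = (SUP theta\<in>Theta0. 1 - F (LR_stat l thetahat theta))
       \<and> s_value l Theta thetahat F Theta0 = 1 - F (2 * (l thetahat - (SUP theta\<in>Theta0. l theta)))"
proof -
  interpret real_distribution M by (rule distr)
  have Fmono: "mono F" unfolding F_cdf by (intro monoI cdf_nondecreasing)
  have F1: "F x \<le> 1" for x unfolding F_cdf by (rule cdf_bounded_prob)
  have Fneg: "F x = 0" if "x < 0" for x
  proof -
    have "AE y in M. y \<notin> {..x}" using nonneg by eventually_elim (use that in auto)
    then have "{..x} \<in> null_sets M" by (subst AE_iff_null_sets) auto
    then show ?thesis unfolding F_cdf cdf_def by (simp add: measure_def null_setsD1)
  qed
  have top: "(F \<longlongrightarrow> 1) at_top" unfolding F_cdf by (rule cdf_lim_at_top_prob)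
  have bot: "(F \<longlongrightarrow> 0) at_bot" unfolding F_cdf by (rule cdf_lim_at_bot)
  define T where "T = LR_stat l thetahat"
  have T0: "T th \<ge> 0" if "th \<in> Theta" for th
    using mle_max that unfolding T_def LR_stat_def by auto
  define g where "g th = 1 - F (T th)" for th
  have quant: "upper_quantile F a \<ge> 0 \<and> F (upper_quantile F a) = 1 - a" if a: "0 < a" "a < 1" for a
  proof -
    have "\<exists>q. F q = 1 - a \<and> 0 \<le> q"
    proof -
      have "\<forall>\<^sub>F x in at_top. F x > 1 - a" using top a by (intro order_tendstoD) auto
      then obtain b where b: "F b > 1 - a" by (meson eventually_at_top_linorder order_refl)
      have Fb0: "b \<ge> 0" using Fneg[of b] b a by (cases "b < 0") auto
      have "F (-1) = 0" by (simp add: Fneg)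
      then obtain q where "-1 \<le> q" "q \<le> b" "F q = 1 - a"
        using IVT'[of F "-1" "1 - a" b] b a Fb0 continuous_on_subset[OF F_cont, of "{-1..b}"]
        by auto
      moreover have "q \<ge> 0" using Fneg[of q] a \<open>F q = 1 - a\<close> by (cases "q < 0") auto
      ultimately show ?thesis by blast
    qed
    then obtain q where q: "F q = 1 - a" "0 \<le> q" by blast
    have uq: "q' = q" if "F q' = 1 - a" for q'
    proof -
      have "q' \<ge> 0" using Fneg[of q'] a that by (cases "q' < 0") auto
      then show ?thesis using strict_mono_on_eqD[OF F_strict] that q by auto
    qed
    have "upper_quantile F a = q" unfolding upper_quantile_def
      using q(1) uq by (rule the_equality)
    then show ?thesis using q by simp
  qed
  define A where "A = {alpha. 0 < alpha \<and> alpha < 1 \<and> conf_region l Theta thetahat F alpha \<inter> Theta0 \<noteq> {}}"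
  have Aeq: "A = {a. 0 < a \<and> a < 1 \<and> (\<exists>th\<in>Theta0. a \<le> g th)}"
  proof -
    have "T th \<le> upper_quantile F a \<longleftrightarrow> a \<le> g th" if "th \<in> Theta" "0 < a" "a < 1" for th a
    proof -
      have "T th \<le> upper_quantile F a \<longleftrightarrow> F (T th) \<le> F (upper_quantile F a)"
        using strict_mono_on_less_eq[OF F_strict, of "T th" "upper_quantile F a"] T0[OF that(1)]
          quant[OF that(2,3)] by auto
      then show ?thesis using quant[OF that(2,3)] unfolding g_def by auto
    qed
    then show ?thesis unfolding A_def conf_region_def T_def using Theta0_sub by (auto 0 3)
  qed
  have gpos: "g th > 0" if "th \<in> Theta" for th
  proof -
    have "F (T th) < F (T th + 1)" using strict_mono_onD[OF F_strict] T0[OF that] by auto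
    then show ?thesis unfolding g_def using F1[of "T th + 1"] by auto
  qed
  have F0: "F x \<ge> 0" for x unfolding F_cdf by (rule cdf_nonneg)
  have gle: "g th \<le> 1" for th unfolding g_def using F0[of "T th"] by simp
  have bddg: "bdd_above (g ` Theta0)" using gle by (intro bdd_aboveI2) auto
  have Ane: "A \<noteq> {}"
  proof -
    obtain th where th: "th \<in> Theta0" using Theta0_ne by auto
    have gt: "g th > 0" using gpos[of th] th Theta0_sub by auto
    then have "g th / 2 \<in> A" unfolding Aeq using th gle[of th] by force
    then show ?thesis by auto
  qed
  have bddA: "bdd_above A" unfolding Aeq by (rule bdd_aboveI[where M=1]) auto
  have SupA: "Sup A = (SUP th\<in>Theta0. g th)"
  proof (rule antisym)
    show "Sup A \<le> (SUP th\<in>Theta0. g th)"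
      using Ane proof (rule cSup_least)
      fix a assume "a \<in> A"
      then obtain th where "th \<in> Theta0" "a \<le> g th" unfolding Aeq by auto
      then show "a \<le> (SUP th\<in>Theta0. g th)" using bddg by (meson cSUP_upper order_trans)
    qed
    show "(SUP th\<in>Theta0. g th) \<le> Sup A"
      using Theta0_ne proof (rule cSUP_least)
      fix th assume th: "th \<in> Theta0"
      show "g th \<le> Sup A"
      proof (rule dense_le_bounded[of 0])
        show "0 < g th" using gpos th Theta0_sub by auto
        fix w assume "0 < w" "w < g th"
        then have "w \<in> A" unfolding Aeq using th gle[of th] by (auto intro!: bexI[of _ th])
        then show "w \<le> Sup A" using bddA by (rule cSup_upper)
      qed
    qed
  qed
  have Sgpos: "(SUP th\<in>Theta0. g th) \<ge> 0"
    using Theta0_ne gpos Theta0_sub bddg by (meson cSUP_upper ex_in_conv less_imp_le order_trans subsetD)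
  have part1: "s_value l Theta thetahat F Theta0 = (SUP th\<in>Theta0. g th)"
    unfolding s_value_def A_def[symmetric] Let_def using Ane SupA Sgpos by simp
  define h where "h t = 1 - F (2 * (l thetahat - t))" for t
  have hmono: "mono h" unfolding h_def using Fmono by (intro monoI) (auto simp: mono_def)
  have hcont: "continuous (at_left s) h" for s
  proof -
    have "continuous_on UNIV h" unfolding h_def
      by (intro continuous_intros continuous_on_compose2[OF F_cont]) auto
    then have "isCont h s" by (simp add: continuous_on_eq_continuous_within)
    then show ?thesis by (rule continuous_within_subset) auto
  qed
  have bddl: "bdd_above (l ` Theta0)" using mle_max Theta0_sub by (intro bdd_aboveI2[where M="l thetahat"]) auto
  have "h (Sup (l ` Theta0)) = (SUP s\<in>l ` Theta0. h s)"
    by (rule continuous_at_Sup_mono[OF hmono hcont]) (use Theta0_ne bddl in auto)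
  also have "\<dots> = (SUP th\<in>Theta0. g th)"
    unfolding image_image g_def h_def T_def LR_stat_def ..
  finally show ?thesis using part1 unfolding g_def T_def h_def by simp
qed

end
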